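(* For any pair of positive integers $r_1,r_2$, there exists a strongly connected digraph $G$ such that its inner out-radius is $r^+(G)=r_1$ and its inner in-radius is $r^-(G)=r_2$.
   Context: Digraphs are finite and may have loops and multiple arcs. $\mathrm{dist}_G(u,v)$ is the length of a shortest directed walk from $u$ to $v$ ($\infty$ if none). The inner out-eccentricity of $u$ is $\mathrm{ecc}^+(u)=\max\{\mathrm{dist}_G(u,v): \mathrm{dist}_G(u,v)<\infty\}$ and the inner in-eccentricity is $\mathrm{ecc}^-(u)=\max\{\mathrm{dist}_G(v,u): \mathrm{dist}_G(v,u)<\infty\}$ (maxima over $v\in V(G)$). The inner out-radius is $r^+(G)=\min_{u}\mathrm{ecc}^+(u)$ and the inner in-radius is $r^-(G)=\min_u \mathrm{ecc}^-(u)$. *)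

theory Defs
  imports Main "HOL-Library.Extended_Nat" "Graph_Theory.Graph_Theory"
begin

text \<open>Digraphs are AFP Graph_Theory pre_digraph records (loops and multiple arcs allowed);
  finiteness and well-formedness via fin_digraph.\<close>

definition dg_dist :: "('a,'b) pre_digraph \<Rightarrow> 'a \<Rightarrow> 'a \<Rightarrow> enat" where
  "dg_dist G u v = (INF p \<in> {p. pre_digraph.awalk G u p v}. enat (length p))"

definition ecc_out :: "('a,'b) pre_digraph \<Rightarrow> 'a \<Rightarrow> nat" where
  "ecc_out G u = Max {the_enat (dg_dist G u v) | v. v \<in> verts G \<and> dg_dist G u v < \<infinity>}"

definition ecc_in :: "('a,'b) pre_digraph \<Rightarrow> 'a \<Rightarrow> nat" where
  "ecc_in G u = Max {the_enat (dg_dist G v u) | v. v \<in> verts G \<and> dg_dist G v u < \<infinity>}"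

definition out_radius :: "('a,'b) pre_digraph \<Rightarrow> nat" where
  "out_radius G = Min (ecc_out G ` verts G)"

definition in_radius :: "('a,'b) pre_digraph \<Rightarrow> nat" where
  "in_radius G = Min (ecc_in G ` verts G)"

end

theory Submission
  imports Defs "HOL-Library.Nat_Bijection"
begin


definition mkG :: "nat set \<Rightarrow> (nat \<times> nat) set \<Rightarrow> (nat, nat) pre_digraph" where
  "mkG V E = \<lparr>verts = V, arcs = prod_encode ` E, tail = fst \<circ> prod_decode, head = snd \<circ> prod_decode\<rparr>"

lemma mkG_simps[simp]: "verts (mkG V E) = V" "arcs (mkG V E) = prod_encode ` E"
  "tail (mkG V E) = fst \<circ> prod_decode" "head (mkG V E) = snd \<circ> prod_decode"
  by (simp_all add: mkG_def)

lemma mkG_wf: assumes "E \<subseteq> V \<times> V" shows "wf_digraph (mkG V E)"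
  using assms by unfold_locales auto

lemma mkG_fin: assumes "E \<subseteq> V \<times> V" "finite V" shows "fin_digraph (mkG V E)"
proof -
  have "finite E" using assms finite_subset by blast
  then show ?thesis using assms mkG_wf[OF assms(1)]
    by (simp add: fin_digraph_def fin_digraph_axioms_def)
qed

lemma walk_iff:
  assumes "E \<subseteq> V \<times> V"
  shows "(\<exists>p. pre_digraph.awalk (mkG V E) u p v \<and> length p = k) \<longleftrightarrow> u \<in> V \<and> (u,v) \<in> E^^k"
proof -
  interpret wf_digraph "mkG V E" by (rule mkG_wf[OF assms])
  show ?thesis
  proof (induction k arbitrary: u)
    case 0
    show ?case by (auto simp: awalk_Nil_iff)
  next
    case (Suc k)
    show ?case
    proof
      assume "\<exists>p. awalk u p v \<and> length p = Suc k"
      then obtain p where p: "awalk u p v" "length p = Suc k" by blast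
      then obtain e es where pe: "p = e # es" by (cases p) auto
      have les: "length es = k" using p pe by simp
      have e: "e \<in> prod_encode ` E" "u = fst (prod_decode e)" "awalk (snd (prod_decode e)) es v"
        using p(1) unfolding pe awalk_Cons_iff by auto
      then obtain xy where "xy \<in> E" "e = prod_encode xy" by blast
      then obtain x y where xy: "(x,y) \<in> E" "e = prod_encode (x,y)" by (cases xy) simp
      have "u = x" "awalk y es v" using e(2,3) xy(2) by simp_all
      then have "(y,v) \<in> E^^k" using Suc.IH les by blast
      then have "(u,v) \<in> E^^Suc k" using xy(1) \<open>u = x\<close> by (metis relpow_Suc_I2)
      then show "u \<in> V \<and> (u,v) \<in> E^^Suc k" using xy \<open>u = x\<close> assms by auto
    next
      assume uv: "u \<in> V \<and> (u,v) \<in> E^^Suc k"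
      then obtain y where y: "(u,y) \<in> E" "(y,v) \<in> E^^k" using relpow_Suc_D2[of u v k E] by blast
      then have "y \<in> V" using assms by auto
      then obtain es where es: "awalk y es v" "length es = k" using Suc.IH y(2) by blast
      have "prod_encode (u,y) \<in> arcs (mkG V E)" using y(1) by simp
      then have "awalk u (prod_encode (u,y) # es) v" using es(1) unfolding awalk_Cons_iff by simp
      then show "\<exists>p. awalk u p v \<and> length p = Suc k" using es(2) by (intro exI[of _ "prod_encode (u,y) # es"]) simp
    qed
  qed
qed

lemma dist_le:
  assumes "E \<subseteq> V \<times> V" "u \<in> V" "(u,v) \<in> E^^k"
  shows "dg_dist (mkG V E) u v \<le> enat k"
proof -
  obtain p where "pre_digraph.awalk (mkG V E) u p v" "length p = k"
    using walk_iff[OF assms(1)] assms by blast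
  then show ?thesis unfolding dg_dist_def by (metis (mono_tags, lifting) INF_lower mem_Collect_eq)
qed

lemma dist_ge:
  assumes "E \<subseteq> V \<times> V" "\<And>k. (u,v) \<in> E^^k \<Longrightarrow> m \<le> k"
  shows "enat m \<le> dg_dist (mkG V E) u v"
  unfolding dg_dist_def
proof (rule INF_greatest)
  fix p assume "p \<in> {p. pre_digraph.awalk (mkG V E) u p v}"
  then have "(u,v) \<in> E^^(length p)" using walk_iff[OF assms(1)] by blast
  then show "enat m \<le> enat (length p)" using assms(2) by simp
qed

lemma max_le:
  assumes "finite V" "u \<in> V" "D u < \<infinity>" "\<And>v. v \<in> V \<Longrightarrow> D v \<le> enat r"
  shows "Max {the_enat (D v) | v. v \<in> V \<and> D v < \<infinity>} \<le> r"
proof -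
  have fin: "finite {the_enat (D v) | v. v \<in> V \<and> D v < \<infinity>}"
    using assms(1) by (simp add: setcompr_eq_image)
  show ?thesis
  proof (subst Max_le_iff[OF fin])
    show "{the_enat (D v) |v. v \<in> V \<and> D v < \<infinity>} \<noteq> {}" using assms by blast
    show "\<forall>a\<in>{the_enat (D v) |v. v \<in> V \<and> D v < \<infinity>}. a \<le> r"
    proof safe
      fix v assume "v \<in> V" "D v < \<infinity>"
      then show "the_enat (D v) \<le> r" using assms(4)[of v]
        by (cases "D v") auto
    qed
  qed
qed

lemma max_ge:
  assumes "finite V" "v \<in> V" "D v < \<infinity>" "enat r \<le> D v"
  shows "r \<le> Max {the_enat (D v) | v. v \<in> V \<and> D v < \<infinity>}"
proof -
  have fin: "finite {the_enat (D v) | v. v \<in> V \<and> D v < \<infinity>}"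
    using assms(1) by (simp add: setcompr_eq_image)
  have "the_enat (D v) \<in> {the_enat (D v) | v. v \<in> V \<and> D v < \<infinity>}" using assms by blast
  moreover have "r \<le> the_enat (D v)" using assms(3,4)
    by (cases "D v") auto
  ultimately show ?thesis using Max_ge[OF fin] order_trans by blast
qed

lemma reach_finite:
  assumes "E \<subseteq> V \<times> V" "u \<in> V" "(u,v) \<in> E\<^sup>*"
  shows "dg_dist (mkG V E) u v < \<infinity>"
proof -
  obtain k where "(u,v) \<in> E^^k" using assms(3) rtrancl_power by blast
  then have "dg_dist (mkG V E) u v \<le> enat k" using dist_le assms by blast
  then show ?thesis using enat_ord_simps(4) le_less_trans by blast
qed

lemma out_rad:
  assumes EV: "E \<subseteq> V \<times> V" and fin: "finite V" and c: "c \<in> V"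
    and up: "\<And>v. v \<in> V \<Longrightarrow> \<exists>k\<le>r. (c,v) \<in> E^^k"
    and lo: "\<And>u. u \<in> V \<Longrightarrow> \<exists>v\<in>V. (u,v) \<in> E\<^sup>* \<and> (\<forall>k. (u,v) \<in> E^^k \<longrightarrow> r \<le> k)"
  shows "out_radius (mkG V E) = r"
proof -
  have ge: "r \<le> ecc_out (mkG V E) u" if uV: "u \<in> V" for u
  proof -
    obtain v where v: "v \<in> V" "(u,v) \<in> E\<^sup>*" "\<forall>k. (u,v) \<in> E^^k \<longrightarrow> r \<le> k" using lo[OF uV] by blast
    show ?thesis unfolding ecc_out_def mkG_simps(1) mkG_simps(1)
      by (rule max_ge[where D="\<lambda>v. dg_dist (mkG V E) u v", OF fin v(1) reach_finite[OF EV uV v(2)]], rule dist_ge[OF EV]) (use v in auto)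
  qed
  have le: "ecc_out (mkG V E) c \<le> r" unfolding ecc_out_def mkG_simps(1)
  proof (rule max_le[where D="\<lambda>v. dg_dist (mkG V E) c v", OF fin c])
    show "dg_dist (mkG V E) c c < \<infinity>" using reach_finite[OF EV c] by simp
    fix v assume "v \<in> V"
    then obtain k where "k \<le> r" "(c,v) \<in> E^^k" using up by blast
    then show "dg_dist (mkG V E) c v \<le> enat r" using dist_le[OF EV c] order_trans by fastforce
  qed
  have eq: "ecc_out (mkG V E) c = r" using ge[OF c] le by simp
  show ?thesis unfolding out_radius_def
  proof (rule Min_eqI)
    show "finite (ecc_out (mkG V E) ` verts (mkG V E))" using fin by simp
    show "\<And>y. y \<in> ecc_out (mkG V E) ` verts (mkG V E) \<Longrightarrow> r \<le> y" using ge by auto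
    show "r \<in> ecc_out (mkG V E) ` verts (mkG V E)" using eq c by force
  qed
qed

lemma in_rad:
  assumes EV: "E \<subseteq> V \<times> V" and fin: "finite V" and c: "c \<in> V"
    and up: "\<And>v. v \<in> V \<Longrightarrow> \<exists>k\<le>r. (v,c) \<in> E^^k"
    and lo: "\<And>u. u \<in> V \<Longrightarrow> \<exists>v\<in>V. (v,u) \<in> E\<^sup>* \<and> (\<forall>k. (v,u) \<in> E^^k \<longrightarrow> r \<le> k)"
  shows "in_radius (mkG V E) = r"
proof -
  have ge: "r \<le> ecc_in (mkG V E) u" if uV: "u \<in> V" for u
  proof -
    obtain v where v: "v \<in> V" "(v,u) \<in> E\<^sup>*" "\<forall>k. (v,u) \<in> E^^k \<longrightarrow> r \<le> k" using lo[OF uV] by blast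
    show ?thesis unfolding ecc_in_def mkG_simps(1) mkG_simps(1)
      by (rule max_ge[where D="\<lambda>v. dg_dist (mkG V E) v u", OF fin v(1) reach_finite[OF EV v(1) v(2)]], rule dist_ge[OF EV]) (use v in auto)
  qed
  have le: "ecc_in (mkG V E) c \<le> r" unfolding ecc_in_def mkG_simps(1)
  proof (rule max_le[where D="\<lambda>v. dg_dist (mkG V E) v c", OF fin c])
    show "dg_dist (mkG V E) c c < \<infinity>" using reach_finite[OF EV c] by simp
    fix v assume v: "v \<in> V"
    then obtain k where "k \<le> r" "(v,c) \<in> E^^k" using up by blast
    then show "dg_dist (mkG V E) v c \<le> enat r" using dist_le[OF EV v] order_trans by fastforce
  qed
  have eq: "ecc_in (mkG V E) c = r" using ge[OF c] le by simp
  show ?thesis unfolding in_radius_def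
  proof (rule Min_eqI)
    show "finite (ecc_in (mkG V E) ` verts (mkG V E))" using fin by simp
    show "\<And>y. y \<in> ecc_in (mkG V E) ` verts (mkG V E) \<Longrightarrow> r \<le> y" using ge by auto
    show "r \<in> ecc_in (mkG V E) ` verts (mkG V E)" using eq c by force
  qed
qed

lemma strong:
  assumes EV: "E \<subseteq> V \<times> V" and c: "c \<in> V"
    and "\<And>v. v \<in> V \<Longrightarrow> (c,v) \<in> E\<^sup>* \<and> (v,c) \<in> E\<^sup>*"
  shows "strongly_connected (mkG V E)"
proof -
  interpret wf_digraph "mkG V E" by (rule mkG_wf[OF EV])
  have "u \<rightarrow>\<^sup>*\<^bsub>mkG V E\<^esub> v" if uv: "u \<in> V" "v \<in> V" for u v
  proof -
    have "(u,c) \<in> E\<^sup>*" "(c,v) \<in> E\<^sup>*" using assms(3) uv by auto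
    then have "(u,v) \<in> E\<^sup>*" by (rule rtrancl_trans)
    then obtain k where "(u,v)\<in>E^^k" using rtrancl_power by blast
    then obtain p where "awalk u p v" using walk_iff[OF EV] uv by blast
    then show ?thesis by (rule reachable_awalkI)
  qed
  then show ?thesis using c by (auto simp: strongly_connected_def)
qed

lemma potential:
  fixes f :: "nat \<Rightarrow> int"
  assumes "\<And>x y. (x,y) \<in> E \<Longrightarrow> f y \<le> f x + 1" "(u,v) \<in> E^^k"
  shows "f v \<le> f u + int k"
  using assms(2)
proof (induction k arbitrary: v)
  case 0 then show ?case by simp
next
  case (Suc k)
  then obtain w where "(u,w) \<in> E^^k" "(w,v) \<in> E" by auto
  then show ?case using Suc.IH assms(1) by fastforce
qed



lemma relpow_conv: "(x,y) \<in> (R\<inverse>)^^k \<longleftrightarrow> (y,x) \<in> R^^k" for R :: "'a rel"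
proof (induction k arbitrary: y)
  case 0 show ?case by auto
next
  case (Suc k)
  show ?case
  proof
    assume "(x,y) \<in> (R\<inverse>)^^Suc k"
    then obtain w where "(x,w) \<in> (R\<inverse>)^^k" "(w,y) \<in> R\<inverse>" by auto
    then have "(w,x) \<in> R^^k" "(y,w) \<in> R" using Suc.IH by auto
    then show "(y,x) \<in> R^^Suc k" by (metis relpow_Suc_I2)
  next
    assume "(y,x) \<in> R^^Suc k"
    then obtain w where "(y,w) \<in> R" "(w,x) \<in> R^^k" using relpow_Suc_D2[of y x k R] by blast
    then have "(x,w) \<in> (R\<inverse>)^^k" "(w,y) \<in> R\<inverse>" using Suc.IH by auto
    then show "(x,y) \<in> (R\<inverse>)^^Suc k" by auto
  qed
qed

definition W :: "(nat \<times> nat) set \<Rightarrow> nat \<Rightarrow> nat \<Rightarrow> nat \<Rightarrow> bool" where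
  "W E u v m \<longleftrightarrow> (\<exists>k\<le>m. (u,v) \<in> E^^k)"

lemma W_trans: "W E u w m1 \<Longrightarrow> W E w v m2 \<Longrightarrow> W E u v (m1+m2)"
  unfolding W_def
proof (elim exE conjE)
  fix k1 k2 assume "k1 \<le> m1" "(u,w) \<in> E^^k1" "k2 \<le> m2" "(w,v) \<in> E^^k2"
  then have "(u,v) \<in> E^^(k1+k2)" by (auto simp: relpow_add)
  then show "\<exists>k\<le>m1+m2. (u,v) \<in> E^^k" using \<open>k1 \<le> m1\<close> \<open>k2 \<le> m2\<close> by (intro exI[of _ "k1+k2"]) auto
qed

lemma W_arc: "(u,v) \<in> E \<Longrightarrow> W E u v 1"
  unfolding W_def by (intro exI[of _ 1]) auto

lemma W_refl: "W E u u 0"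
  unfolding W_def by auto

lemma W_mono: "W E u v m \<Longrightarrow> m \<le> m' \<Longrightarrow> W E u v m'"
  unfolding W_def by (meson le_trans)

lemma W_rtrancl: "W E u v m \<Longrightarrow> (u,v) \<in> E\<^sup>*"
  unfolding W_def using rtrancl_power by blast

definition VV :: "nat \<Rightarrow> nat \<Rightarrow> nat set" where "VV a n = {0..<a+n}"

definition EE :: "nat \<Rightarrow> nat \<Rightarrow> (nat \<times> nat) set" where
  "EE a n = {(x,y). (y = x+1 \<and> y < a) \<or> (x = a-1 \<and> a \<le> y \<and> y < a+n)
     \<or> (x = y+1 \<and> a \<le> y \<and> x < a+n) \<or> (x = a \<and> y = 0)}"

lemma EE_sub: "a \<ge> 1 \<Longrightarrow> n \<ge> 1 \<Longrightarrow> EE a n \<subseteq> VV a n \<times> VV a n"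
  unfolding EE_def VV_def by auto

lemma chain: "i \<le> j \<Longrightarrow> j < a \<Longrightarrow> W (EE a n) i j (j - i)"
proof (induction j)
  case 0 then show ?case by (simp add: W_refl)
next
  case (Suc j)
  show ?case
  proof (cases "i = Suc j")
    case True then show ?thesis by (simp add: W_refl)
  next
    case False
    then have "W (EE a n) i j (j - i)" using Suc by simp
    moreover have "W (EE a n) j (Suc j) 1" by (rule W_arc) (use Suc in \<open>auto simp: EE_def\<close>)
    ultimately have "W (EE a n) i (Suc j) (j - i + 1)" by (rule W_trans)
    then show ?thesis using False Suc by (simp add: Suc_diff_le)
  qed
qed

lemma pathd: "a \<le> v \<Longrightarrow> v + m < a + n \<Longrightarrow> W (EE a n) (v+m) v m"
proof (induction m)
  case 0 then show ?case by (simp add: W_refl)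
next
  case (Suc m)
  have "W (EE a n) (v + Suc m) (v+m) 1" by (rule W_arc) (use Suc in \<open>auto simp: EE_def\<close>)
  moreover have "W (EE a n) (v+m) v m" using Suc by simp
  ultimately show ?case using W_trans by fastforce
qed

lemma pathd': "a \<le> v \<Longrightarrow> v \<le> w \<Longrightarrow> w < a + n \<Longrightarrow> W (EE a n) w v (w - v)"
  using pathd[of a v "w - v" n] by simp

lemma pot:
  fixes f :: "nat \<Rightarrow> int" and m :: int
  assumes "\<And>x y. (x,y) \<in> EE a n \<Longrightarrow> f y \<le> f x + 1" "(u,v) \<in> (EE a n)^^k"
    "m \<le> f v - f u"
  shows "m \<le> int k"
proof -
  have "f v \<le> f u + int k" by (rule potential[OF assms(1,2)])
  then show ?thesis using assms(3) by linarith
qed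

lemma to0: assumes "a \<ge> 1" "n \<ge> 1" "u \<in> VV a n" shows "W (EE a n) u 0 (a+n)"
proof (cases "u < a")
  case True
  have "W (EE a n) u (a-1) (a-1-u)" using chain[of u "a-1" a n] True by simp
  moreover have "W (EE a n) (a-1) a 1" by (rule W_arc) (use assms in \<open>auto simp: EE_def VV_def\<close>)
  moreover have "W (EE a n) a 0 1" by (rule W_arc) (auto simp: EE_def)
  ultimately have "W (EE a n) u 0 (a-1-u+1+1)" using W_trans by blast
  then show ?thesis by (rule W_mono) (use assms True in auto)
next
  case False
  have "W (EE a n) u a (u-a)" using pathd'[of a a u n] False assms by (simp add: VV_def)
  moreover have "W (EE a n) a 0 1" by (rule W_arc) (auto simp: EE_def)
  ultimately have "W (EE a n) u 0 (u-a+1)" using W_trans by blast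
  then show ?thesis by (rule W_mono) (use assms False in \<open>auto simp: VV_def\<close>)
qed

lemma from0: assumes "a \<ge> 1" "n \<ge> 1" "v \<in> VV a n" shows "W (EE a n) 0 v a"
proof (cases "v < a")
  case True
  then show ?thesis using chain[of 0 v a n] W_mono by fastforce
next
  case False
  have "W (EE a n) 0 (a-1) (a-1)" using chain[of 0 "a-1" a n] assms by simp
  moreover have "W (EE a n) (a-1) v 1" by (rule W_arc) (use assms False in \<open>auto simp: EE_def VV_def\<close>)
  ultimately have "W (EE a n) 0 v (a-1+1)" using W_trans by blast
  then show ?thesis using assms by simp
qed

lemma reach_all: assumes "a \<ge> 1" "n \<ge> 1" "u \<in> VV a n" "v \<in> VV a n" shows "(u,v) \<in> (EE a n)\<^sup>*"
  using W_rtrancl[OF to0[OF assms(1,2,3)]] W_rtrancl[OF from0[OF assms(1,2,4)]] by (rule rtrancl_trans)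



lemma out_up: "a \<ge> 1 \<Longrightarrow> n \<ge> 1 \<Longrightarrow> v \<in> VV a n \<Longrightarrow> \<exists>k\<le>a. (0,v) \<in> (EE a n)^^k"
  using from0 unfolding W_def by blast

lemma out_lo:
  assumes a: "a \<ge> 1" and n: "n \<ge> 1" and u: "u \<in> VV a n"
  shows "\<exists>v\<in>VV a n. (u,v) \<in> (EE a n)\<^sup>* \<and> (\<forall>k. (u,v) \<in> (EE a n)^^k \<longrightarrow> a \<le> k)"
proof -
  consider "u = 0" | "0 < u" "u < a" | "a \<le> u" by linarith
  then show ?thesis
  proof cases
    case 1
    define f :: "nat \<Rightarrow> int" where "f x = (if x < a then int x else int a)" for x
    have "\<And>x y. (x,y) \<in> EE a n \<Longrightarrow> f y \<le> f x + 1" unfolding EE_def f_def by auto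
    then have "\<forall>k. (u,a) \<in> (EE a n)^^k \<longrightarrow> a \<le> k"
      using pot[of a n f u a _ "int a"] 1 by (auto simp: f_def)
    moreover have "a \<in> VV a n" using n by (simp add: VV_def)
    ultimately show ?thesis using reach_all[OF a n u] by blast
  next
    case 2
    define f :: "nat \<Rightarrow> int" where "f x = (if x < u then int a - int u + 1 + int x
       else if x < a then int x - int u else int a - int u)" for x
    have "\<And>x y. (x,y) \<in> EE a n \<Longrightarrow> f y \<le> f x + 1" using 2 unfolding EE_def f_def by auto
    then have "\<forall>k. (u,u-1) \<in> (EE a n)^^k \<longrightarrow> a \<le> k"
      using pot[of a n f u "u-1" _ "int a"] 2 by (auto simp: f_def)
    moreover have "u-1 \<in> VV a n" using n u by (simp add: VV_def)
    ultimately show ?thesis using reach_all[OF a n u] by blast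
  next
    case 3
    define f :: "nat \<Rightarrow> int" where "f x = (if x < a then int x else int a - 1 - int x)" for x
    have "\<And>x y. (x,y) \<in> EE a n \<Longrightarrow> f y \<le> f x + 1" unfolding EE_def f_def by auto
    then have "\<forall>k. (u,a-1) \<in> (EE a n)^^k \<longrightarrow> a \<le> k"
      using pot[of a n f u "a-1" _ "int a"] 3 a by (auto simp: f_def)
    moreover have "a-1 \<in> VV a n" using n a by (simp add: VV_def)
    ultimately show ?thesis using reach_all[OF a n u] by blast
  qed
qed

lemma in_up:
  assumes a: "a \<ge> 1" and b: "b \<ge> a" and n: "n = 2*b - a + 1" and w: "w \<in> VV a n"
  shows "\<exists>k\<le>b. (w,b) \<in> (EE a n)^^k"
proof -
  have "W (EE a n) w b b"
  proof -
    consider "w < a" | "a \<le> w" "w < b" | "w = b" | "b < w" by linarith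
    then show ?thesis
    proof cases
      case 1
      have "W (EE a n) w (a-1) (a-1-w)" using chain[of w "a-1" a n] 1 by simp
      moreover have "W (EE a n) (a-1) b 1" by (rule W_arc) (use a b n in \<open>auto simp: EE_def\<close>)
      ultimately have "W (EE a n) w b (a-1-w+1)" by (rule W_trans)
      then show ?thesis by (rule W_mono) (use 1 b in auto)
    next
      case 2
      have "W (EE a n) w a (w-a)" using pathd'[of a a w n] 2 n by simp
      moreover have "W (EE a n) a 0 1" by (rule W_arc) (auto simp: EE_def)
      moreover have "W (EE a n) 0 (a-1) (a-1)" using chain[of 0 "a-1" a n] a by simp
      moreover have "W (EE a n) (a-1) b 1" by (rule W_arc) (use a b n in \<open>auto simp: EE_def\<close>)
      ultimately have "W (EE a n) w b (w-a+1+(a-1)+1)" using W_trans by blast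
      then show ?thesis by (rule W_mono) (use 2 a in auto)
    next
      case 3 then show ?thesis using W_refl W_mono by fastforce
    next
      case 4
      have "W (EE a n) w b (w-b)" using pathd'[of a b w n] 4 b n w by (simp add: VV_def)
      then show ?thesis by (rule W_mono) (use 4 n w b in \<open>auto simp: VV_def\<close>)
    qed
  qed
  then show ?thesis unfolding W_def by blast
qed

lemma in_lo:
  assumes a: "a \<ge> 1" and b: "b \<ge> a" and n: "n = 2*b - a + 1" and u: "u \<in> VV a n"
  shows "\<exists>w\<in>VV a n. (w,u) \<in> (EE a n)\<^sup>* \<and> (\<forall>k. (w,u) \<in> (EE a n)^^k \<longrightarrow> b \<le> k)"
proof -
  have n1: "n \<ge> 1" using n by simp
  consider "u \<le> b" | "b < u" by linarith
  then show ?thesis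
  proof cases
    case 1
    define f :: "nat \<Rightarrow> int" where "f x = (if x < a then 2 * int b - int a + 1 + int x else 2 * int b - int x)" for x
    have "\<And>x y. (x,y) \<in> EE a n \<Longrightarrow> f y \<le> f x + 1" using a b n unfolding EE_def f_def by auto
    then have "\<forall>k. (2*b,u) \<in> (EE a n)^^k \<longrightarrow> b \<le> k"
      using pot[of a n f "2*b" u _ "int b"] 1 a b by (auto simp: f_def)
    moreover have "2*b \<in> VV a n" using n a b by (simp add: VV_def)
    ultimately show ?thesis using reach_all[OF a n1 _ u] by blast
  next
    case 2
    define f :: "nat \<Rightarrow> int" where "f x = (if x < a then int u - int a + int x
       else if x < u then int u - 1 - int x else int u)" for x
    have "\<And>x y. (x,y) \<in> EE a n \<Longrightarrow> f y \<le> f x + 1" using 2 a b unfolding EE_def f_def by auto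
    then have "\<forall>k. (u-1,u) \<in> (EE a n)^^k \<longrightarrow> b \<le> k"
      using pot[of a n f "u-1" u _ "int b"] 2 a b by (auto simp: f_def)
    moreover have "u-1 \<in> VV a n" using u by (simp add: VV_def)
    ultimately show ?thesis using reach_all[OF a n1 _ u] by blast
  qed
qed



lemma case_le:
  assumes "a \<ge> 1" "b \<ge> a" "n = 2*b - a + 1"
  shows "fin_digraph (mkG (VV a n) (EE a n)) \<and> strongly_connected (mkG (VV a n) (EE a n)) \<and>
    out_radius (mkG (VV a n) (EE a n)) = a \<and> in_radius (mkG (VV a n) (EE a n)) = b"
proof -
  have n1: "n \<ge> 1" using assms by simp
  have sub: "EE a n \<subseteq> VV a n \<times> VV a n" using EE_sub[OF assms(1) n1] .
  have fin: "finite (VV a n)" by (simp add: VV_def)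
  have z: "0 \<in> VV a n" "b \<in> VV a n" using assms by (auto simp: VV_def)
  show ?thesis
  proof (intro conjI)
    show "fin_digraph (mkG (VV a n) (EE a n))" by (rule mkG_fin[OF sub fin])
    show "strongly_connected (mkG (VV a n) (EE a n))"
      by (rule strong[OF sub z(1)]) (use reach_all[OF assms(1) n1] z in auto)
    show "out_radius (mkG (VV a n) (EE a n)) = a"
      by (rule out_rad[OF sub fin z(1)]) (use out_up[OF assms(1) n1] out_lo[OF assms(1) n1] in auto)
    show "in_radius (mkG (VV a n) (EE a n)) = b"
      by (rule in_rad[OF sub fin z(2)]) (use in_up[OF assms] in_lo[OF assms] in auto)
  qed
qed

lemma case_ge:
  assumes "a \<ge> 1" "b \<ge> a" "n = 2*b - a + 1"
  shows "fin_digraph (mkG (VV a n) ((EE a n)\<inverse>)) \<and> strongly_connected (mkG (VV a n) ((EE a n)\<inverse>)) \<and>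
    out_radius (mkG (VV a n) ((EE a n)\<inverse>)) = b \<and> in_radius (mkG (VV a n) ((EE a n)\<inverse>)) = a"
proof -
  have n1: "n \<ge> 1" using assms by simp
  have sub: "(EE a n)\<inverse> \<subseteq> VV a n \<times> VV a n" using EE_sub[OF assms(1) n1] by auto
  have fin: "finite (VV a n)" by (simp add: VV_def)
  have z: "0 \<in> VV a n" "b \<in> VV a n" using assms by (auto simp: VV_def)
  have rc: "(x,y) \<in> ((EE a n)\<inverse>)\<^sup>* \<longleftrightarrow> (y,x) \<in> (EE a n)\<^sup>*" for x y
    by (simp add: rtrancl_converse)
  show ?thesis
  proof (intro conjI)
    show "fin_digraph (mkG (VV a n) ((EE a n)\<inverse>))" by (rule mkG_fin[OF sub fin])
    show "strongly_connected (mkG (VV a n) ((EE a n)\<inverse>))"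
      by (rule strong[OF sub z(1)]) (use reach_all[OF assms(1) n1] z in \<open>auto simp: rc\<close>)
    show "out_radius (mkG (VV a n) ((EE a n)\<inverse>)) = b"
      by (rule out_rad[OF sub fin z(2)]) (use in_up[OF assms] in_lo[OF assms] in \<open>auto simp: rc relpow_conv\<close>)
    show "in_radius (mkG (VV a n) ((EE a n)\<inverse>)) = a"
      by (rule in_rad[OF sub fin z(1)]) (use out_up[OF assms(1) n1] out_lo[OF assms(1) n1] in \<open>auto simp: rc relpow_conv\<close>)
  qed
qed

theorem proposition2p5:
  fixes r1 r2 :: nat
  assumes "r1 > 0" and "r2 > 0"
  shows "\<exists>G :: (nat, nat) pre_digraph.
           fin_digraph G \<and> strongly_connected G \<and>
           out_radius G = r1 \<and> in_radius G = r2"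
proof (cases "r1 \<le> r2")
  case True
  have "1 \<le> r1" using assms by simp
  from case_le[OF this True refl] show ?thesis by blast
next
  case False
  have "1 \<le> r2" "r2 \<le> r1" using assms False by simp_all
  from case_ge[OF this refl] show ?thesis by blast
qed

end
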